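(* Let $(\Omega,\nu)$ be a measure space and $u,v\colon\Omega\to(0,1]$ measurable functions such that, for some $\alpha>0$, $$\int_\Omega|\log u|\,d\nu<\infty\qquad\text{and}\qquad\int_\Omega u\,v^{-\alpha}\,d\nu<\infty .$$ Then $\displaystyle\int_\Omega|\log v|\,d\nu<\infty$. *)

theory Defs
  imports "HOL-Analysis.Analysis"
begin

end

theory Submission
  imports Defs
begin

lemma pw_bound:
  fixes a b \<alpha> :: real
  assumes "a \<ge> 0" "b \<ge> 0" "\<alpha> > 0"
  shows "b \<le> (2/\<alpha>) * (a + exp (\<alpha>*b - a))"
proof (cases "\<alpha>*b \<le> 2*a")
  case True
  have "b \<le> 2*a/\<alpha>" using True assms by (simp add: field_simps)
  moreover have "(2/\<alpha>) * a \<le> (2/\<alpha>) * (a + exp (\<alpha>*b - a))"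
    using assms by (intro mult_left_mono) (auto simp: less_imp_le)
  ultimately show ?thesis by simp
next
  case False
  have e: "\<alpha>*b - a \<le> exp (\<alpha>*b - a)" using exp_ge_add_one_self[of "\<alpha>*b - a"] by linarith
  define t where "t = exp (\<alpha>*b - a)"
  have t1: "\<alpha>*b - a \<le> t" "0 \<le> t" using e unfolding t_def by auto
  have "\<alpha>*b \<le> 2*(a + t)" using False t1 assms by (smt (verit))
  then have "\<alpha>*b \<le> 2*(a + exp (\<alpha>*b - a))" unfolding t_def .
  then show ?thesis using assms by (simp add: field_simps)
qed

theorem lemma4p2:
  fixes M :: "'a measure" and u v :: "'a \<Rightarrow> real" and \<alpha> :: real
  assumes u_meas: "u \<in> borel_measurable M"
    and v_meas: "v \<in> borel_measurable M"
    and u_range: "\<And>x. x \<in> space M \<Longrightarrow> 0 < u x \<and> u x \<le> 1"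
    and v_range: "\<And>x. x \<in> space M \<Longrightarrow> 0 < v x \<and> v x \<le> 1"
    and alpha_pos: "\<alpha> > 0"
    and log_u_fin: "(\<integral>\<^sup>+ x. ennreal \<bar>ln (u x)\<bar> \<partial>M) < \<infinity>"
    and uv_fin: "(\<integral>\<^sup>+ x. ennreal (u x * v x powr (- \<alpha>)) \<partial>M) < \<infinity>"
  shows "(\<integral>\<^sup>+ x. ennreal \<bar>ln (v x)\<bar> \<partial>M) < \<infinity>"
proof -
  have pw: "ennreal \<bar>ln (v x)\<bar> \<le> ennreal (2/\<alpha>) * (ennreal \<bar>ln (u x)\<bar> + ennreal (u x * v x powr (- \<alpha>)))"
    if x: "x \<in> space M" for x
  proof -
    have u: "0 < u x" "u x \<le> 1" and v: "0 < v x" "v x \<le> 1" using u_range[OF x] v_range[OF x] by auto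
    have lu: "\<bar>ln (u x)\<bar> = - ln (u x)" using u by simp
    have lv: "\<bar>ln (v x)\<bar> = - ln (v x)" using v by simp
    have eq: "u x * v x powr (- \<alpha>) = exp (\<alpha> * (- ln (v x)) - (- ln (u x)))"
      using u v by (simp add: powr_def exp_diff exp_minus field_simps exp_add[symmetric])
    have r: "\<bar>ln (v x)\<bar> \<le> (2/\<alpha>) * (\<bar>ln (u x)\<bar> + u x * v x powr (- \<alpha>))"
      unfolding lu lv eq using pw_bound[of "- ln (u x)" "- ln (v x)" \<alpha>] u v alpha_pos by simp
    have "ennreal (2/\<alpha>) * (ennreal \<bar>ln (u x)\<bar> + ennreal (u x * v x powr (- \<alpha>)))
        = ennreal ((2/\<alpha>) * (\<bar>ln (u x)\<bar> + u x * v x powr (- \<alpha>)))"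
    proof -
      have p: "ennreal \<bar>ln (u x)\<bar> + ennreal (u x * v x powr (- \<alpha>)) = ennreal (\<bar>ln (u x)\<bar> + u x * v x powr (- \<alpha>))"
        using u by (intro ennreal_plus[symmetric]) auto
      show ?thesis unfolding p using alpha_pos u v by (intro ennreal_mult[symmetric]) (auto intro!: add_nonneg_nonneg simp del: abs_of_nonpos abs_of_neg)
    qed
    then show ?thesis using r by (simp add: ennreal_leI)
  qed
  have "(\<integral>\<^sup>+ x. ennreal \<bar>ln (v x)\<bar> \<partial>M) \<le>
        (\<integral>\<^sup>+ x. ennreal (2/\<alpha>) * (ennreal \<bar>ln (u x)\<bar> + ennreal (u x * v x powr (- \<alpha>))) \<partial>M)"
    by (rule nn_integral_mono) (use pw in auto)
  also have "\<dots> = ennreal (2/\<alpha>) * ((\<integral>\<^sup>+ x. ennreal \<bar>ln (u x)\<bar> \<partial>M) + (\<integral>\<^sup>+ x. ennreal (u x * v x powr (- \<alpha>)) \<partial>M))"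
    using u_meas v_meas by (simp add: nn_integral_cmult nn_integral_add)
  also have "\<dots> < \<infinity>" using log_u_fin uv_fin by (simp add: ennreal_mult_less_top)
  finally show ?thesis .
qed

end
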